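(* Consider a connectivity graph $G=(V,E)$ with source $s$, a set $R$ of $n$ relay nodes, and a terminal node $t$, and let $p'$ be the probability that two given nodes of $G$ are joined by an edge. Let $0\le k\le n$, let $(V_k,\overline{V}_k)$ be any partition of $R$ with $|V_k|=k$ and $|\overline V_k|=n-k$, and let $C_k$ be the capacity of the corresponding $s$-$t$-cut. Then for every $0<\epsilon<1$, $$\Pr\big[C_k\le (1-\epsilon)\,\mathbf{E}[C_k]\big]\;\le\;\exp\!\Big(-\Big(\frac{\epsilon^2 (n-k)\,p'}{2}-\ln(k+1)\Big)\Big).$$
   Context: Quasi random geometric graph: fix reals $0\le r<r'\le 1$ and $p\in[0,1]$. Nodes are placed independently and uniformly at random in $[0,1]^2$. For two nodes $u,v$ with Euclidean distance $d(u,v)$: $(u,v)\in E$ if $d(u,v)\le r$; $(u,v)\notin E$ if $d(u,v)>r'$; and $(u,v)\in E$ with probability $p$ if $r<d(u,v)\le r'$. The graph is undirected. Connectivity graph: $V=\{s\}\cup R\cup T$, where $s$ is a source node, $R$ is a set of $n$ relay nodes and $T$ is a set of terminal nodes, and the graph is a quasi random geometric graph on $V$, except that the source is never joined directly to a terminal (every message passes through at least one relay). The source only sends and the terminals only receive. Edge capacities are $C_{ij}=1$ if $(i,j)\in E$ and $C_{ij}=0$ otherwise, with $C_{ij}=C_{ji}$. The connection probability $p'$ is the probability that two given nodes are joined by an edge; it is the same for every pair of nodes that may be joined. Standing assumption: for each fixed vertex $i$, the indicators $\{C_{ij}\}_{j\neq i}$ are mutually independent Bernoulli($p'$) random variables.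 $s$-$t$-cut of size $k$: for a terminal $t\in T$, a partition $R=V_k\cup\overline V_k$ with $V_k\cap\overline V_k=\emptyset$, $|V_k|=k$ and $|\overline V_k|=n-k$. The sets $\{s\}\cup V_k$ and $\overline V_k\cup\{t\}$ are the two sides of the cut. Its capacity is $$C_k=\sum_{i\in\overline V_k}C_{si}+\sum_{j\in V_k}\sum_{i\in\overline V_k}C_{ji}+\sum_{j\in V_k}C_{jt}.$$ *)

theory Defs
  imports "HOL-Probability.Probability"
begin

definition conn_vertices :: "'v \<Rightarrow> 'v set \<Rightarrow> 'v set \<Rightarrow> 'v set" where
  "conn_vertices s R T = insert s (R \<union> T)"

text \<open>Capacity of the s-t-cut with sides {s} + Vk and Vkbar + {t}; C i j is the
  (random) 0/1 edge capacity between i and j.\<close>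
definition cut_capacity ::
  "('v \<Rightarrow> 'v \<Rightarrow> 'w \<Rightarrow> real) \<Rightarrow> 'v \<Rightarrow> 'v \<Rightarrow> 'v set \<Rightarrow> 'v set \<Rightarrow> 'w \<Rightarrow> real" where
  "cut_capacity C s t Vk Vkbar \<omega> =
     (\<Sum>i\<in>Vkbar. C s i \<omega>) + (\<Sum>j\<in>Vk. \<Sum>i\<in>Vkbar. C j i \<omega>) + (\<Sum>j\<in>Vk. C j t \<omega>)"

end

theory Submission imports Defs begin

lemma exp_neg_le: assumes "(0::real) \<le> x" shows "exp (-x) \<le> 1 - x + x\<^sup>2/2"
proof -
  let ?g = "\<lambda>x::real. 1 - x + x\<^sup>2/2 - exp (-x)"
  have "?g 0 \<le> ?g x"
  proof (rule DERIV_nonneg_imp_nondecreasing[OF assms])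
    fix y :: real assume "0 \<le> y" "y \<le> x"
    have "DERIV ?g y :> (-1 + y + exp (-y))"
      by (auto intro!: derivative_eq_intros simp: power2_eq_square)
    moreover have "-1 + y + exp (-y) \<ge> 0" using exp_ge_add_one_self[of "-y"] by linarith
    ultimately show "\<exists>d. DERIV ?g y :> d \<and> d \<ge> 0" by blast
  qed
  thus ?thesis by simp
qed

context prob_space begin

lemma bern_facts:
  assumes rv: "random_variable borel X" and zo: "\<And>\<omega>. \<omega> \<in> space M \<Longrightarrow> X \<omega> \<in> {0,1}"
    and pr: "prob {\<omega>\<in>space M. X \<omega> = 1} = p"
  shows "integrable M X" "expectation X = p"
proof -
  show "integrable M X"
    by (rule integrable_const_bound[where B=1]) (use zo rv in \<open>force intro!: AE_I2\<close>)+
  have "expectation X = expectation (indicator {\<omega>\<in>space M. X \<omega> = 1})"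
    by (intro Bochner_Integration.integral_cong) (auto dest: zo simp: indicator_def)
  also have "\<dots> = p" using pr by (simp add: Int_absorb2)
  finally show "expectation X = p" .
qed

lemma chernoff_lower:
  fixes X :: "'i \<Rightarrow> 'a \<Rightarrow> real" and p \<epsilon> :: real
  assumes fin: "finite I" and ind: "indep_vars (\<lambda>_. borel) X I"
    and zo: "\<And>i \<omega>. i \<in> I \<Longrightarrow> \<omega> \<in> space M \<Longrightarrow> X i \<omega> \<in> {0,1}"
    and pr: "\<And>i. i \<in> I \<Longrightarrow> prob {\<omega>\<in>space M. X i \<omega> = 1} = p"
    and p: "0 \<le> p" and eps: "0 < \<epsilon>" "\<epsilon> < 1"
  shows "expectation (\<lambda>\<omega>. \<Sum>i\<in>I. X i \<omega>) = card I * p"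
    and "prob {\<omega>\<in>space M. (\<Sum>i\<in>I. X i \<omega>) \<le> (1-\<epsilon>) * (card I * p)}
           \<le> exp (-(\<epsilon>\<^sup>2 * card I * p / 2))"
proof -
  have rv[measurable]: "\<And>i. i \<in> I \<Longrightarrow> random_variable borel (X i)"
    using ind by (auto simp: indep_vars_def)
  have bf: "\<And>i. i \<in> I \<Longrightarrow> integrable M (X i) \<and> expectation (X i) = p"
    using bern_facts rv zo pr by blast
  show "expectation (\<lambda>\<omega>. \<Sum>i\<in>I. X i \<omega>) = card I * p"
    using bf by (subst Bochner_Integration.integral_sum) auto
  define c where "c = 1 - exp (-\<epsilon>)"
  have c: "0 \<le> c" "c \<le> 1" using eps by (auto simp: c_def)
  define a where "a = (1-\<epsilon>) * (card I * p)"
  have meas: "(\<lambda>\<omega>. \<Sum>i\<in>I. X i \<omega>) \<in> borel_measurable M" using rv by measurable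
  have "ennreal (prob {\<omega>\<in>space M. (\<Sum>i\<in>I. X i \<omega>) \<le> a})
      = emeasure M {\<omega>\<in>space M. (\<Sum>i\<in>I. X i \<omega>) \<le> a}"
    by (simp add: emeasure_eq_measure)
  also have "\<dots> \<le> ennreal (exp (\<epsilon> * a)) *
       nn_integral M (\<lambda>\<omega>. ennreal (exp (-\<epsilon> * (\<Sum>i\<in>I. X i \<omega>))) * indicator (space M) \<omega>)"
    by (rule Chernoff_ineq_nn_integral_le[OF eps(1) sets.top meas])
  also have "nn_integral M (\<lambda>\<omega>. ennreal (exp (-\<epsilon> * (\<Sum>i\<in>I. X i \<omega>))) * indicator (space M) \<omega>)
      = (\<integral>\<^sup>+\<omega>. (\<Prod>i\<in>I. ennreal (exp (-\<epsilon> * X i \<omega>))) \<partial>M)"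
    by (intro nn_integral_cong)
       (simp_all add: sum_distrib_left exp_sum fin prod_ennreal)
  also have "\<dots> = (\<Prod>i\<in>I. \<integral>\<^sup>+\<omega>. ennreal (exp (-\<epsilon> * X i \<omega>)) \<partial>M)"
    by (intro indep_vars_nn_integral fin indep_vars_compose2[OF ind]) auto
  also have "\<dots> \<le> (\<Prod>i\<in>I. ennreal (exp (- c * p)))"
  proof (intro prod_mono_ennreal)
    fix i assume i: "i \<in> I"
    have cx: "\<And>\<omega>. \<omega> \<in> space M \<Longrightarrow> c * X i \<omega> \<le> 1"
      using zo[OF i] c by force
    have "(\<integral>\<^sup>+\<omega>. ennreal (exp (-\<epsilon> * X i \<omega>)) \<partial>M) = (\<integral>\<^sup>+\<omega>. ennreal (1 - c * X i \<omega>) \<partial>M)"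
      using zo[OF i] by (intro nn_integral_cong) (force simp: c_def)
    also have "\<dots> = ennreal (expectation (\<lambda>\<omega>. 1 - c * X i \<omega>))"
      using bf[OF i] zo[OF i] c cx
      by (intro nn_integral_eq_integral) (auto intro!: AE_I2)
    also have "expectation (\<lambda>\<omega>. 1 - c * X i \<omega>) = 1 - c * p"
      using bf[OF i] by (simp add: prob_space)
    also have "1 - c * p \<le> exp (- c * p)" using exp_ge_add_one_self[of "-c*p"] by simp
    finally show "(\<integral>\<^sup>+\<omega>. ennreal (exp (-\<epsilon> * X i \<omega>)) \<partial>M) \<le> ennreal (exp (- c * p))"
      by (simp add: ennreal_leI)
  qed
  finally have A: "ennreal (prob {\<omega>\<in>space M. (\<Sum>i\<in>I. X i \<omega>) \<le> a})
     \<le> ennreal (exp (\<epsilon> * a)) * (\<Prod>i\<in>I. ennreal (exp (- c * p)))"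
    by (simp add: mult_left_mono)
  also have "\<dots> = ennreal (exp (\<epsilon> * a - card I * c * p))"
  proof -
    have "(\<Prod>i\<in>I. ennreal (exp (- c * p))) = ennreal (exp (card I * (-c*p)))"
      by (simp add: ennreal_power exp_of_nat_mult[symmetric])
    thus ?thesis by (simp add: ennreal_mult'[symmetric] exp_add[symmetric] algebra_simps)
  qed
  finally have B: "prob {\<omega>\<in>space M. (\<Sum>i\<in>I. X i \<omega>) \<le> a} \<le> exp (\<epsilon> * a - card I * c * p)"
    by (subst (asm) ennreal_le_iff) auto
  have "\<epsilon> * a - card I * c * p = card I * p * (\<epsilon> * (1-\<epsilon>) - c)"
    by (simp add: a_def algebra_simps)
  also have "\<dots> \<le> card I * p * (- \<epsilon>\<^sup>2/2)"
    using exp_neg_le[of \<epsilon>] eps p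
    by (intro mult_left_mono) (auto simp: c_def power2_eq_square algebra_simps)
  finally have key: "\<epsilon> * a - card I * c * p \<le> card I * p * (- \<epsilon>\<^sup>2/2)" .
  show "prob {\<omega>\<in>space M. (\<Sum>i\<in>I. X i \<omega>) \<le> (1-\<epsilon>) * (card I * p)}
           \<le> exp (-(\<epsilon>\<^sup>2 * card I * p / 2))"
  proof -
    have "exp (\<epsilon> * a - card I * c * p) \<le> exp (card I * p * (- \<epsilon>\<^sup>2/2))"
      using key by simp
    also have "card I * p * (- \<epsilon>\<^sup>2/2) = -(\<epsilon>\<^sup>2 * card I * p / 2)" by (simp add: algebra_simps)
    finally show ?thesis using B unfolding a_def by linarith
  qed
qed

end
theorem theorem8:
  fixes M :: "'w measure" and C :: "'v \<Rightarrow> 'v \<Rightarrow> 'w \<Rightarrow> real"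
    and s t :: 'v and R T Vk Vkbar :: "'v set" and n k :: nat and p' \<epsilon> :: real
  assumes M: "prob_space M"
    and finR: "finite R" and cardR: "card R = n"
    and finT: "finite T" and tT: "t \<in> T"
    and sR: "s \<notin> R" and sT: "s \<notin> T" and RT: "R \<inter> T = {}"
    and p'_nonneg: "0 \<le> p'" and p'_le1: "p' \<le> 1"
    and rv: "\<And>i j. i \<in> conn_vertices s R T \<Longrightarrow> j \<in> conn_vertices s R T \<Longrightarrow>
               C i j \<in> borel_measurable M"
    and sym: "\<And>i j. C i j = C j i"
    and zero_one: "\<And>i j \<omega>. \<omega> \<in> space M \<Longrightarrow> C i j \<omega> \<in> {0, 1}"
    and no_s_T: "\<And>x \<omega>. x \<in> T \<Longrightarrow> C s x \<omega> = 0"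
    and bern: "\<And>i j. i \<in> conn_vertices s R T \<Longrightarrow> j \<in> conn_vertices s R T \<Longrightarrow> i \<noteq> j \<Longrightarrow>
               \<not> (i = s \<and> j \<in> T) \<Longrightarrow> \<not> (j = s \<and> i \<in> T) \<Longrightarrow>
               prob_space.prob M {\<omega> \<in> space M. C i j \<omega> = 1} = p'"
    and indep: "\<And>i. i \<in> conn_vertices s R T \<Longrightarrow>
               prob_space.indep_vars M (\<lambda>_. borel) (C i) (conn_vertices s R T - {i})"
    and kn: "k \<le> n"
    and part: "Vk \<union> Vkbar = R" "Vk \<inter> Vkbar = {}"
    and cardVk: "card Vk = k" and cardVkbar: "card Vkbar = n - k"
    and eps: "0 < \<epsilon>" "\<epsilon> < 1"
  shows "prob_space.prob M
           {\<omega> \<in> space M. cut_capacity C s t Vk Vkbar \<omega>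
              \<le> (1 - \<epsilon>) * prob_space.expectation M (cut_capacity C s t Vk Vkbar)}
         \<le> exp (- (\<epsilon>\<^sup>2 * real (n - k) * p' / 2 - ln (real k + 1)))"
proof -
  interpret prob_space M by (rule M)
  define V where "V = conn_vertices s R T"
  have sV: "s \<in> V" and RV: "R \<subseteq> V" and TV: "T \<subseteq> V" by (auto simp: V_def conn_vertices_def)
  have VkR: "Vk \<subseteq> R" and VbR: "Vkbar \<subseteq> R" using part by auto
  have finVk: "finite Vk" and finVb: "finite Vkbar" using VkR VbR finR finite_subset by blast+
  have tR: "t \<notin> R" using tT RT by auto
  have sVk: "s \<notin> Vk" using VkR sR by auto
  have tVb: "t \<notin> Vkbar" using VbR tR by auto
  define J where "J = insert s Vk"
  define Y where "Y g = (if g = s then Vkbar else insert t Vkbar)" for g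
  define S where "S g \<omega> = (\<Sum>i\<in>Y g. C g i \<omega>)" for g \<omega>
  have finJ: "finite J" and cardJ: "card J = k + 1"
    using finVk sVk cardVk by (auto simp: J_def)
  have cut: "cut_capacity C s t Vk Vkbar \<omega> = (\<Sum>g\<in>J. S g \<omega>)" for \<omega>
  proof -
    have "(\<Sum>g\<in>J. S g \<omega>) = S s \<omega> + (\<Sum>g\<in>Vk. S g \<omega>)"
      unfolding J_def using finVk sVk by simp
    also have "(\<Sum>g\<in>Vk. S g \<omega>) = (\<Sum>g\<in>Vk. (\<Sum>i\<in>Vkbar. C g i \<omega>) + C g t \<omega>)"
      using sVk finVb tVb by (intro sum.cong) (auto simp: S_def Y_def)
    finally show ?thesis
      by (simp add: cut_capacity_def sum.distrib S_def Y_def)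
  qed
  have YV: "Y g \<subseteq> V - {g}" if g: "g \<in> J" for g
    using g RV TV tT VbR VkR part(2) sR tR unfolding J_def Y_def by auto
  have finY: "finite (Y g)" for g using finVb by (simp add: Y_def)
  have cardY: "card (Y g) \<ge> n - k" for g
    using finVb tVb cardVkbar by (simp add: Y_def)
  have gV: "g \<in> V" if "g \<in> J" for g using that sV RV VkR by (auto simp: J_def)
  have ch: "expectation (S g) = card (Y g) * p' \<and>
      prob {\<omega>\<in>space M. S g \<omega> \<le> (1-\<epsilon>) * (card (Y g) * p')} \<le> exp (-(\<epsilon>\<^sup>2 * card (Y g) * p' / 2))"
    if g: "g \<in> J" for g
  proof -
    have ind: "indep_vars (\<lambda>_. borel) (C g) (Y g)"
      using indep_vars_subset[OF indep[OF gV[OF g, unfolded V_def]]] YV[OF g] by (simp add: V_def)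
    have pr: "prob {\<omega>\<in>space M. C g i \<omega> = 1} = p'" if i: "i \<in> Y g" for i
    proof (rule bern)
      show "g \<in> conn_vertices s R T" using gV[OF g] by (simp add: V_def)
      show "i \<in> conn_vertices s R T" using YV[OF g] i by (auto simp: V_def)
      show "g \<noteq> i" using YV[OF g] i by auto
      show "\<not> (g = s \<and> i \<in> T)" using i VbR RT by (auto simp: Y_def)
      show "\<not> (i = s \<and> g \<in> T)" using i VbR sR tT sT by (auto simp: Y_def split: if_splits)
    qed
    show ?thesis
      using chernoff_lower[OF finY ind _ pr p'_nonneg eps] zero_one unfolding S_def by auto
  qed
  have rvC: "random_variable borel (C g i)" if "g \<in> J" "i \<in> Y g" for g i
  proof -
    have "i \<in> V" using YV[OF that(1)] that(2) by auto
    thus ?thesis using rv gV[OF that(1)] by (simp add: V_def)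
  qed
  have intC: "integrable M (C g i)" if "g \<in> J" "i \<in> Y g" for g i
    using bern_facts(1)[OF rvC[OF that] zero_one] by blast
  have rvS[measurable]: "S g \<in> borel_measurable M" if "g \<in> J" for g
    unfolding S_def using rvC[OF that] by (intro borel_measurable_sum) auto
  have intS: "integrable M (S g)" if "g \<in> J" for g
    unfolding S_def using intC[OF that] by (intro Bochner_Integration.integrable_sum) auto
  have Ecut: "expectation (cut_capacity C s t Vk Vkbar) = (\<Sum>g\<in>J. card (Y g) * p')"
  proof -
    have "expectation (cut_capacity C s t Vk Vkbar) = expectation (\<lambda>\<omega>. \<Sum>g\<in>J. S g \<omega>)"
      by (rule arg_cong[where f=expectation]) (simp add: fun_eq_iff cut)
    also have "\<dots> = (\<Sum>g\<in>J. expectation (S g))"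
      using intS by (intro Bochner_Integration.integral_sum) auto
    also have "\<dots> = (\<Sum>g\<in>J. card (Y g) * p')" using ch by (intro sum.cong) auto
    finally show ?thesis .
  qed
  define A where "A g = {\<omega>\<in>space M. S g \<omega> \<le> (1-\<epsilon>) * (card (Y g) * p')}" for g
  have Asets: "A g \<in> sets M" if "g \<in> J" for g
    unfolding A_def using rvS[OF that] by measurable
  have sub: "{\<omega> \<in> space M. cut_capacity C s t Vk Vkbar \<omega>
              \<le> (1 - \<epsilon>) * expectation (cut_capacity C s t Vk Vkbar)} \<subseteq> (\<Union>g\<in>J. A g)"
  proof
    fix \<omega> assume w: "\<omega> \<in> {\<omega> \<in> space M. cut_capacity C s t Vk Vkbar \<omega>
              \<le> (1 - \<epsilon>) * expectation (cut_capacity C s t Vk Vkbar)}"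
    show "\<omega> \<in> (\<Union>g\<in>J. A g)"
    proof (rule ccontr)
      assume "\<omega> \<notin> (\<Union>g\<in>J. A g)"
      hence lt: "\<And>g. g \<in> J \<Longrightarrow> (1-\<epsilon>) * (card (Y g) * p') < S g \<omega>"
        using w by (auto simp: A_def)
      have "(\<Sum>g\<in>J. (1-\<epsilon>) * (card (Y g) * p')) < (\<Sum>g\<in>J. S g \<omega>)"
        using finJ lt by (intro sum_strict_mono) (auto simp: J_def)
      thus False using w by (simp add: cut Ecut sum_distrib_left)
    qed
  qed
  have "prob {\<omega> \<in> space M. cut_capacity C s t Vk Vkbar \<omega>
              \<le> (1 - \<epsilon>) * expectation (cut_capacity C s t Vk Vkbar)} \<le> prob (\<Union>g\<in>J. A g)"
    using sub Asets finJ by (intro finite_measure_mono) auto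
  also have "\<dots> \<le> (\<Sum>g\<in>J. prob (A g))"
    using Asets finJ by (intro measure_UNION_le) auto
  also have "\<dots> \<le> (\<Sum>g\<in>J. exp (-(\<epsilon>\<^sup>2 * real (n - k) * p' / 2)))"
  proof (intro sum_mono)
    fix g assume g: "g \<in> J"
    have "prob (A g) \<le> exp (-(\<epsilon>\<^sup>2 * card (Y g) * p' / 2))" using ch[OF g] by (simp add: A_def)
    also have "\<dots> \<le> exp (-(\<epsilon>\<^sup>2 * real (n - k) * p' / 2))"
      using cardY[of g] p'_nonneg
      by (auto intro!: mult_right_mono mult_left_mono divide_right_mono)
    finally show "prob (A g) \<le> exp (-(\<epsilon>\<^sup>2 * real (n - k) * p' / 2))" .
  qed
  also have "\<dots> = (real k + 1) * exp (-(\<epsilon>\<^sup>2 * real (n - k) * p' / 2))"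
    using cardJ by simp
  also have "\<dots> = exp (- (\<epsilon>\<^sup>2 * real (n - k) * p' / 2 - ln (real k + 1)))"
  proof -
    have "exp (- (\<epsilon>\<^sup>2 * real (n - k) * p' / 2 - ln (real k + 1)))
        = exp (- (\<epsilon>\<^sup>2 * real (n - k) * p' / 2)) * exp (ln (real k + 1))"
      using exp_add[of "- (\<epsilon>\<^sup>2 * real (n - k) * p' / 2)" "ln (real k + 1)"]
      by (simp add: algebra_simps)
    also have "exp (ln (real k + 1)) = real k + 1" by simp
    finally show ?thesis by simp
  qed
  finally show ?thesis .
qed

end
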